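(* Let $k\ge 1$ be an integer, let $H$ be a multigraph with feedback vertex number at most $k$ in which every vertex has degree at least 3, and let $B\subseteq V(H)$ be a $k$-significant subset of vertices of $H$. Then the feedback vertex number of $H-B$ is at most $k-1$.
   Context: Multigraphs are undirected and may contain parallel edges and self-loops; a self-loop is a cycle of length one and two parallel edges form a cycle of length two; the degree of a vertex is the number of incident edges, with self-loops counted twice. The feedback vertex number is the minimum number of vertices whose removal leaves an acyclic multigraph. A subset $B\subseteq V(H)$ is $k$-significant if $|B|\le 12k$ and $B$ contains every vertex of $H$ of degree at least $|E(H)|/(3k)$. *)

theory Defs
  imports Complex_Main "HOL-Library.Multiset" "HOL-Library.Uprod"
begin

text \<open>A finite multigraph is a pair (V, E) of a vertex set V and a multiset E of
unordered pairs of vertices (edges); Upair v v is a self-loop, and an edge of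
multiplicity m stands for m parallel edges.\<close>

definition multigraph :: "'a set \<Rightarrow> 'a uprod multiset \<Rightarrow> bool" where
  "multigraph V E \<longleftrightarrow> finite V \<and> (\<forall>e \<in># E. set_uprod e \<subseteq> V)"

definition degree :: "'a uprod multiset \<Rightarrow> 'a \<Rightarrow> nat" where
  "degree E v = sum_mset (image_mset
     (\<lambda>e. if e = Upair v v then 2 else if v \<in> set_uprod e then 1 else 0) E)"

text \<open>A cycle: a nonempty list of distinct vertices v_0..v_(n-1) together with n
distinct edges (as a sub-multiset of E) joining v_i and v_((i+1) mod n).
n = 1 is a self-loop, n = 2 a pair of parallel edges.\<close>
definition cycle_edges :: "'a list \<Rightarrow> 'a uprod multiset" where
  "cycle_edges vs = mset (map (\<lambda>i. Upair (vs ! i) (vs ! ((i + 1) mod length vs)))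
                              [0..<length vs])"

definition has_cycle :: "'a set \<Rightarrow> 'a uprod multiset \<Rightarrow> bool" where
  "has_cycle V E \<longleftrightarrow> (\<exists>vs. vs \<noteq> [] \<and> distinct vs \<and> set vs \<subseteq> V \<and> cycle_edges vs \<subseteq># E)"

definition acyclic_mg :: "'a set \<Rightarrow> 'a uprod multiset \<Rightarrow> bool" where
  "acyclic_mg V E \<longleftrightarrow> \<not> has_cycle V E"

definition del_verts_E :: "'a set \<Rightarrow> 'a uprod multiset \<Rightarrow> 'a uprod multiset" where
  "del_verts_E S E = filter_mset (\<lambda>e. set_uprod e \<inter> S = {}) E"

definition fvn :: "'a set \<Rightarrow> 'a uprod multiset \<Rightarrow> nat" where
  "fvn V E = Min {card S | S. S \<subseteq> V \<and> acyclic_mg (V - S) (del_verts_E S E)}"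

definition k_significant :: "nat \<Rightarrow> 'a set \<Rightarrow> 'a uprod multiset \<Rightarrow> 'a set \<Rightarrow> bool" where
  "k_significant k V E B \<longleftrightarrow> B \<subseteq> V \<and> card B \<le> 12 * k \<and>
     (\<forall>v \<in> V. real (degree E v) \<ge> real (size E) / (3 * real k) \<longrightarrow> v \<in> B)"

end

theory Submission
  imports Defs
begin


lemma has_cycle_mono:
  assumes "has_cycle V' E'" "V' \<subseteq> V" "E' \<subseteq># E"
  shows "has_cycle V E"
  using assms unfolding has_cycle_def by (meson order_trans subset_mset.order_trans)

lemma mset_distinct_subseteq:
  assumes "distinct xs" "set xs \<subseteq> set_mset E"
  shows "mset xs \<subseteq># E"
proof (rule mset_subset_eqI)
  fix x
  show "count (mset xs) x \<le> count E x"
    using assms by (cases "x \<in> set xs") (auto simp: distinct_count_atmost_1 count_mset_0_iff)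
qed

lemma cycle_from_list:
  assumes d: "distinct c" and l: "length c \<ge> 3" and s: "set c \<subseteq> V"
    and e: "\<And>i. i < length c \<Longrightarrow> Upair (c!i) (c!((i+1) mod length c)) \<in># E"
  shows "has_cycle V E"
proof -
  let ?n = "length c"
  let ?f = "\<lambda>i. Upair (c ! i) (c ! ((i + 1) mod ?n))"
  have inj: "inj_on ?f {0..<?n}"
  proof (rule inj_onI)
    fix i j assume i: "i \<in> {0..<?n}" and j: "j \<in> {0..<?n}" and eq: "?f i = ?f j"
    have np: "0 < ?n" using l by linarith
    have im: "(i+1) mod ?n < ?n" "(j+1) mod ?n < ?n" using np by (rule mod_less_divisor)+
    from eq have "(i = j \<and> (i+1) mod ?n = (j+1) mod ?n) \<or> (i = (j+1) mod ?n \<and> (i+1) mod ?n = j)"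
      using d i j im by (auto simp: nth_eq_iff_index_eq)
    then show "i = j"
    proof
      assume h: "i = (j+1) mod ?n \<and> (i+1) mod ?n = j"
      show "i = j"
      proof (cases "j + 1 < ?n")
        case True
        then have "i = j + 1" using h by simp
        have "i < ?n" using i by simp
        show ?thesis
        proof (cases "j + 2 < ?n")
          case True
          then have m2: "(i+1) mod ?n = j + 2" using \<open>i = j+1\<close> by simp
          from h have "(i+1) mod ?n = j" by blast
          then show ?thesis using m2 by linarith
        next
          case False
          then have "i + 1 = ?n" using \<open>i = j+1\<close> \<open>i < ?n\<close> by simp
          then have "(i+1) mod ?n = 0" by simp
          then show ?thesis using h l \<open>i + 1 = ?n\<close> \<open>i = j+1\<close> by simp
        qed
      next
        case False
        then have "j + 1 = ?n" using j by auto
        then have "i = 0" using h by simp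
        then show ?thesis using h l \<open>j+1 = ?n\<close> by auto
      qed
    qed simp
  qed
  have "cycle_edges c \<subseteq># E"
    unfolding cycle_edges_def
    apply (rule mset_distinct_subseteq)
    using inj e by (auto simp: distinct_map)
  moreover have "c \<noteq> []" using l by auto
  ultimately show ?thesis using d s unfolding has_cycle_def by blast
qed


definition mpath :: "'a set \<Rightarrow> 'a uprod multiset \<Rightarrow> 'a list \<Rightarrow> bool" where
  "mpath V E ps \<longleftrightarrow> ps \<noteq> [] \<and> distinct ps \<and> set ps \<subseteq> V \<and>
     (\<forall>i. i + 1 < length ps \<longrightarrow> Upair (ps!i) (ps!(i+1)) \<in># E)"

lemma loop_cycle:
  assumes "Upair u u \<in># E" "u \<in> V" shows "has_cycle V E"
proof -
  have "cycle_edges [u] = {#Upair u u#}" by (simp add: cycle_edges_def)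
  then show ?thesis using assms unfolding has_cycle_def
    by (intro exI[of _ "[u]"]) auto
qed

lemma double_cycle:
  assumes "{#Upair u w, Upair u w#} \<subseteq># E" "u \<in> V" "w \<in> V" "u \<noteq> w" shows "has_cycle V E"
proof -
  have "cycle_edges [u, w] = {#Upair u w, Upair w u#}" by (simp add: cycle_edges_def)
  also have "Upair w u = Upair u w" by auto
  finally show ?thesis using assms unfolding has_cycle_def
    by (intro exI[of _ "[u,w]"]) auto
qed

lemma leaf_exists:
  assumes fin: "finite V" and ne: "V \<noteq> {}" and ac: "\<not> has_cycle V E"
    and sub: "\<forall>e\<in>#E. set_uprod e \<subseteq> V"
  shows "\<exists>u\<in>V. size (filter_mset (\<lambda>e. u \<in> set_uprod e) E) \<le> 1"
proof -
  obtain v0 where v0: "v0 \<in> V" using ne by blast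
  define L where "L = length ` {ps. mpath V E ps}"
  have Lsub: "L \<subseteq> {..card V}"
  proof
    fix l assume "l \<in> L"
    then obtain ps where ps: "mpath V E ps" "l = length ps" unfolding L_def by blast
    have "length ps = card (set ps)" using ps(1) by (simp add: mpath_def distinct_card)
    also have "\<dots> \<le> card V" using ps(1) fin by (intro card_mono) (auto simp: mpath_def)
    finally show "l \<in> {..card V}" using ps by simp
  qed
  have finL: "finite L" using Lsub finite_subset by blast
  have "mpath V E [v0]" using v0 by (simp add: mpath_def)
  then have "length [v0] \<in> L" unfolding L_def by blast
  then have LneE: "L \<noteq> {}" by blast
  define n where "n = Max L"
  have "n \<in> L" unfolding n_def using finL LneE by (rule Max_in)
  then obtain ps where ps: "mpath V E ps" and pn: "length ps = n" unfolding L_def by blast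
  have maxL: "length qs \<le> n" if "mpath V E qs" for qs
  proof -
    have "length qs \<in> L" unfolding L_def using that by blast
    then show ?thesis unfolding n_def using finL by (intro Max_ge)
  qed
  have psall: "ps \<noteq> [] \<and> distinct ps \<and> set ps \<subseteq> V \<and>
     (\<forall>i. i + 1 < length ps \<longrightarrow> Upair (ps!i) (ps!(i+1)) \<in># E)"
    using ps unfolding mpath_def by blast
  then have psne: "ps \<noteq> []" and psd: "distinct ps" and psV: "set ps \<subseteq> V"
    and pse: "\<And>i. i + 1 < length ps \<Longrightarrow> Upair (ps!i) (ps!(i+1)) \<in># E"
    by blast+
  define u where "u = ps ! 0"
  have n0: "0 < n" using psne pn by auto
  have uV: "u \<in> V" using psV psne u_def by (simp add: subset_iff)
  define M where "M = filter_mset (\<lambda>e. u \<in> set_uprod e) E"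
  have ME: "M \<subseteq># E" unfolding M_def by (rule multiset_filter_subset)
  have noloop: "Upair u u \<notin># E" using loop_cycle[of u E V] uV ac by blast
  have Mform: "\<exists>w. e = Upair u w \<and> w \<noteq> u \<and> w \<in> V" if "e \<in># M" for e
  proof -
    obtain a b where e: "e = Upair a b" by (cases e) blast
    have eE: "e \<in># E" and ue: "u \<in> set_uprod e" using that by (auto simp: M_def)
    have "set_uprod e \<subseteq> V" using sub eE by blast
    then have abV: "a \<in> V" "b \<in> V" using e by auto
    have uab: "u = a \<or> u = b" using ue e by simp
    show ?thesis
    proof (cases "u = a")
      case True
      then have "b \<noteq> u" using noloop eE e by blast
      then show ?thesis using True e abV by blast
    next
      case False
      then have ub: "u = b" using uab by blast
      then have "a \<noteq> u" using noloop eE e by blast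
      moreover have "e = Upair u a" using e ub by auto
      ultimately show ?thesis using abV by blast
    qed
  qed
  have good: False if w: "Upair u w \<in># E" "w \<noteq> u" "w \<in> V" "2 \<le> n \<longrightarrow> w \<noteq> ps ! 1" for w
  proof (cases "w \<in> set ps")
    case False
    have "mpath V E (w # ps)"
      unfolding mpath_def
    proof (intro conjI allI impI)
      show "distinct (w # ps)" using False psd by simp
      show "set (w # ps) \<subseteq> V" using psV w by simp
      fix i assume i: "i + 1 < length (w # ps)"
      show "Upair ((w # ps) ! i) ((w # ps) ! (i + 1)) \<in># E"
      proof (cases i)
        case 0
        have eq: "Upair w (ps ! 0) = Upair u w" using u_def by auto
        have a1: "(w # ps) ! i = w" using 0 by simp
        have a2: "(w # ps) ! (i + 1) = ps ! 0" using 0 by simp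
        show ?thesis unfolding a1 a2 eq using w(1) .
      next
        case (Suc i')
        then show ?thesis using i pse[of i'] by simp
      qed
    qed simp
    then have "length (w # ps) \<le> n" by (rule maxL)
    then show False using pn by simp
  next
    case True
    then obtain j where j: "j < n" "ps ! j = w" using pn by (auto simp: in_set_conv_nth)
    have j0: "j \<noteq> 0"
    proof
      assume "j = 0" then show False using j(2) w(2) u_def by simp
    qed
    have j1: "j \<noteq> 1"
    proof
      assume "j = 1"
      then have "2 \<le> n" "ps ! 1 = w" using j by auto
      then show False using w(4) by simp
    qed
    define c where "c = take (j+1) ps"
    have lc: "length c = j + 1" using j pn by (simp add: c_def)
    have "has_cycle V E"
    proof (rule cycle_from_list[of c])
      show "distinct c" using psd by (simp add: c_def)
      show "3 \<le> length c" using lc j0 j1 by simp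
      show "set c \<subseteq> V" using psV set_take_subset[of "j+1" ps] by (simp add: c_def)
      fix i assume i: "i < length c"
      show "Upair (c ! i) (c ! ((i + 1) mod length c)) \<in># E"
      proof (cases "i < j")
        case True
        then have "(i + 1) mod length c = i + 1" using lc by simp
        then show ?thesis using True j pse[of i] pn by (simp add: c_def)
      next
        case False
        then have ij: "i = j" using i lc by simp
        then have "(i + 1) mod length c = 0" using lc by simp
        then have a2: "c ! ((i + 1) mod length c) = u" using u_def lc by (simp add: c_def)
        have a1: "c ! i = w" using ij j lc by (simp add: c_def)
        have eq: "Upair w u = Upair u w" by auto
        show ?thesis unfolding a1 a2 eq using w(1) .
      qed
    qed
    then show False using ac by simp
  qed
  show ?thesis
  proof (rule ccontr)
    assume "\<not> ?thesis"
    then have "\<not> size M \<le> 1" using uV unfolding M_def by blast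
    then have s2: "2 \<le> size M" by simp
    then have "M \<noteq> {#}" by auto
    then obtain e1 where e1: "e1 \<in># M" by blast
    have "size (M - {#e1#}) = size M - 1" using e1 by (rule size_Diff_singleton)
    then have "M - {#e1#} \<noteq> {#}" using s2 by auto
    then obtain e2 where e2: "e2 \<in># M - {#e1#}" by blast
    obtain w1 where w1: "e1 = Upair u w1" "w1 \<noteq> u" "w1 \<in> V" using Mform e1 by blast
    have e2M: "e2 \<in># M" using e2 by (meson in_diffD)
    obtain w2 where w2: "e2 = Upair u w2" "w2 \<noteq> u" "w2 \<in> V" using Mform e2M by blast
    show False
    proof (cases "e1 = e2")
      case True
      have "e1 \<in># M - {#e1#}" using e2 True by simp
      then have "count (M - {#e1#}) e1 > 0" by (simp only: count_greater_zero_iff)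
      then have c2: "count M e1 \<ge> 2" by simp
      have "{#e1, e1#} \<subseteq># M"
      proof (rule mset_subset_eqI)
        fix x show "count {#e1, e1#} x \<le> count M x" using c2 by (cases "x = e1") auto
      qed
      then have "{#e1, e1#} \<subseteq># E" using ME by (rule subset_mset.order_trans)
      then show False using double_cycle[of u w1 E V] w1 uV ac by simp
    next
      case False
      then have "w1 \<noteq> w2" using w1 w2 by auto
      have e1E: "e1 \<in># E" and e2E: "e2 \<in># E" using e1 e2M ME by (auto dest: mset_subset_eqD)
      show False
      proof (cases "2 \<le> n \<longrightarrow> w1 \<noteq> ps ! 1")
        case True
        then show False using good[of w1] w1 e1E by simp
      next
        case False
        then have "2 \<le> n \<longrightarrow> w2 \<noteq> ps ! 1" using \<open>w1 \<noteq> w2\<close> by auto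
        then show False using good[of w2] w2 e2E by simp
      qed
    qed
  qed
qed


lemma forest_bound_aux:
  "card V = n \<Longrightarrow> finite V \<Longrightarrow> V \<noteq> {} \<Longrightarrow> \<not> has_cycle V E \<Longrightarrow>
   \<forall>e\<in>#E. set_uprod e \<subseteq> V \<Longrightarrow> size E < card V"
proof (induction n arbitrary: V E rule: less_induct)
  case (less n)
  obtain u where uV: "u \<in> V" and leaf: "size (filter_mset (\<lambda>e. u \<in> set_uprod e) E) \<le> 1"
    using leaf_exists[of V E] less.prems by blast
  define E' where "E' = filter_mset (\<lambda>e. u \<notin> set_uprod e) E"
  have sE: "size E = size E' + size (filter_mset (\<lambda>e. u \<in> set_uprod e) E)"
    unfolding E'_def by (metis multiset_partition size_union add.commute)
  show ?case
  proof (cases "V - {u} = {}")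
    case True
    then have Vu: "V = {u}" using uV by blast
    have "E = {#}"
    proof (rule ccontr)
      assume "E \<noteq> {#}"
      then obtain e where e: "e \<in># E" by blast
      obtain a b where ab: "e = Upair a b" by (cases e) blast
      have "set_uprod e \<subseteq> {u}" using e less.prems(5) Vu by blast
      then have "e = Upair u u" using ab by auto
      then show False using loop_cycle[of u E V] e uV less.prems(4) by simp
    qed
    then show ?thesis using Vu by simp
  next
    case False
    have c: "card (V - {u}) < n" using less.prems(1,2) uV card_Diff1_less[of V u] by simp
    have sub': "\<forall>e\<in>#E'. set_uprod e \<subseteq> V - {u}" using less.prems(5) unfolding E'_def by auto
    have ac': "\<not> has_cycle (V - {u}) E'"
      using less.prems(4) has_cycle_mono[of "V - {u}" E' V E] unfolding E'_def by auto
    have "size E' < card (V - {u})"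
      using less.IH[OF c refl _ False ac' sub'] less.prems(2) by simp
    moreover have "card (V - {u}) = card V - 1" using uV less.prems(2) by simp
    ultimately show ?thesis using sE leaf by linarith
  qed
qed

lemma forest_bound:
  "finite V \<Longrightarrow> V \<noteq> {} \<Longrightarrow> \<not> has_cycle V E \<Longrightarrow>
   \<forall>e\<in>#E. set_uprod e \<subseteq> V \<Longrightarrow> size E < card V"
  using forest_bound_aux by blast

definition dterm :: "'a \<Rightarrow> 'a uprod \<Rightarrow> nat" where
  "dterm v e = (if e = Upair v v then 2 else if v \<in> set_uprod e then 1 else 0)"

lemma degree_eq: "degree E v = (\<Sum>e\<in>#E. dterm v e)"
  by (simp add: degree_def dterm_def)

lemma dterm_Upair: "dterm v (Upair a b) = (if v = a then 1 else 0) + (if v = b then 1 else 0)"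
  by (auto simp: dterm_def)

lemma W_Upair:
  assumes "finite A"
  shows "(\<Sum>v\<in>A. dterm v (Upair a b)) = (if a \<in> A then 1 else 0) + (if b \<in> A then 1 else 0)"
proof -
  have "(\<Sum>v\<in>A. dterm v (Upair a b)) = (\<Sum>v\<in>A. (if v = a then 1 else 0)) + (\<Sum>v\<in>A. (if v = b then 1 else 0))"
    by (simp add: dterm_Upair sum.distrib)
  also have "\<dots> = (if a \<in> A then 1 else 0) + (if b \<in> A then 1 else 0)"
    using assms by (simp add: sum.delta')
  finally show ?thesis .
qed

lemma deg_sum: "(\<Sum>v\<in>A. degree E v) = (\<Sum>e\<in>#E. \<Sum>v\<in>A. dterm v e)"
proof (induction E)
  case empty
  then show ?case by (simp add: degree_def)
next
  case (add e E)
  have "(\<Sum>v\<in>A. degree (add_mset e E) v) = (\<Sum>v\<in>A. dterm v e + degree E v)"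
    by (simp add: degree_eq)
  also have "\<dots> = (\<Sum>v\<in>A. dterm v e) + (\<Sum>v\<in>A. degree E v)" by (rule sum.distrib)
  finally show ?case using add by simp
qed


lemma fvn_set_finite:
  assumes "finite V"
  shows "finite {card S | S. S \<subseteq> V \<and> acyclic_mg (V - S) (del_verts_E S E)}"
proof (rule finite_subset[of _ "{..card V}"])
  show "{card S | S. S \<subseteq> V \<and> acyclic_mg (V - S) (del_verts_E S E)} \<subseteq> {..card V}"
  proof
    fix c assume "c \<in> {card S | S. S \<subseteq> V \<and> acyclic_mg (V - S) (del_verts_E S E)}"
    then obtain S where "c = card S" "S \<subseteq> V" by blast
    then show "c \<in> {..card V}" using assms card_mono by simp
  qed
qed simp

lemma fvn_le:
  assumes "finite V" "S \<subseteq> V" "acyclic_mg (V - S) (del_verts_E S E)"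
  shows "fvn V E \<le> card S"
  unfolding fvn_def
proof (rule Min_le)
  show "finite {card S | S. S \<subseteq> V \<and> acyclic_mg (V - S) (del_verts_E S E)}"
    by (rule fvn_set_finite[OF assms(1)])
  show "card S \<in> {card S | S. S \<subseteq> V \<and> acyclic_mg (V - S) (del_verts_E S E)}"
    using assms(2,3) by blast
qed

lemma no_cycle_empty: "\<not> has_cycle {} E"
  by (auto simp: has_cycle_def)

lemma fvn_obtain:
  assumes "finite V"
  shows "\<exists>S. S \<subseteq> V \<and> acyclic_mg (V - S) (del_verts_E S E) \<and> card S = fvn V E"
proof -
  define Q where "Q = {card S | S. S \<subseteq> V \<and> acyclic_mg (V - S) (del_verts_E S E)}"
  have ac: "acyclic_mg (V - V) (del_verts_E V E)"
    unfolding acyclic_mg_def Diff_cancel by (rule no_cycle_empty)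
  have "card V \<in> Q" unfolding Q_def
  proof (intro CollectI exI[of _ V] conjI)
    show "card V = card V" by (rule refl)
    show "V \<subseteq> V" by (rule subset_refl)
    show "acyclic_mg (V - V) (del_verts_E V E)" by (rule ac)
  qed
  then have ne: "Q \<noteq> {}" by blast
  have fin: "finite Q" unfolding Q_def by (rule fvn_set_finite[OF assms])
  have "Min Q \<in> Q" using fin ne by (rule Min_in)
  moreover have "fvn V E = Min Q" unfolding fvn_def Q_def by (rule refl)
  ultimately have "fvn V E \<in> Q" by simp
  then have "\<exists>S. fvn V E = card S \<and> S \<subseteq> V \<and> acyclic_mg (V - S) (del_verts_E S E)"
    unfolding Q_def by (rule CollectD)
  then obtain S where S: "fvn V E = card S" "S \<subseteq> V" "acyclic_mg (V - S) (del_verts_E S E)"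
    by (elim exE conjE)
  show ?thesis using S by (intro exI[of _ S]) simp
qed

theorem corollary6p2:
  fixes k :: nat and V :: "'a set" and E :: "'a uprod multiset" and B :: "'a set"
  assumes "k \<ge> 1"
    and "multigraph V E"
    and "fvn V E \<le> k"
    and "\<forall>v \<in> V. degree E v \<ge> 3"
    and "k_significant k V E B"
  shows "fvn (V - B) (del_verts_E B E) \<le> k - 1"
proof -
  have finV: "finite V" and subE: "\<forall>e\<in>#E. set_uprod e \<subseteq> V"
    using assms(2) by (auto simp: multigraph_def)
  have BV: "B \<subseteq> V" and sig: "\<forall>v \<in> V. real (degree E v) \<ge> real (size E) / (3 * real k) \<longrightarrow> v \<in> B"
    using assms(5) by (auto simp: k_significant_def)
  obtain X where XV: "X \<subseteq> V" and Xac: "acyclic_mg (V - X) (del_verts_E X E)"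
    and Xc: "card X = fvn V E" using fvn_obtain[OF finV] by blast
  have Xk: "card X \<le> k" using Xc assms(3) by simp
  have finX: "finite X" using XV finV finite_subset by blast
  show ?thesis
  proof (cases "X \<inter> B = {}")
    case False
    have "acyclic_mg ((V - B) - (X - B)) (del_verts_E (X - B) (del_verts_E B E))"
    proof -
      have "(V - B) - (X - B) \<subseteq> V - X" by blast
      moreover have "del_verts_E (X - B) (del_verts_E B E) \<subseteq># del_verts_E X E"
        unfolding del_verts_E_def by (rule mset_subset_eqI) auto
      ultimately show ?thesis using Xac has_cycle_mono[of "(V - B) - (X - B)" "del_verts_E (X - B) (del_verts_E B E)" "V - X" "del_verts_E X E"]
        unfolding acyclic_mg_def by blast
    qed
    then have "fvn (V - B) (del_verts_E B E) \<le> card (X - B)"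
      using finV XV by (intro fvn_le) auto
    moreover have "card (X - B) < card X"
      using False by (intro psubset_card_mono[OF finX]) blast
    ultimately show ?thesis using Xk by linarith
  next
    case True
    show ?thesis
    proof (cases "V = {}")
      case True
      have "fvn (V - B) (del_verts_E B E) \<le> card ({} :: 'a set)"
        using True by (intro fvn_le) (auto simp: acyclic_mg_def no_cycle_empty)
      then show ?thesis by simp
    next
      case Vne: False
      define F where "F = V - X"
      define EF where "EF = del_verts_E X E"
      define I where "I = filter_mset (\<lambda>e. \<not> set_uprod e \<inter> X = {}) E"
      define m where "m = size E"
      have finF: "finite F" using finV F_def by simp
      have EI: "E = EF + I" unfolding EF_def I_def del_verts_E_def by (rule multiset_partition)
      have mI: "m = size EF + size I" unfolding m_def using EI by (metis size_union)
      have EFsub: "\<forall>e\<in>#EF. set_uprod e \<subseteq> F"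
        using subE unfolding EF_def F_def del_verts_E_def by auto
      have WF2: "(\<Sum>v\<in>F. dterm v e) = 2" if "e \<in># EF" for e
      proof -
        obtain a b where ab: "e = Upair a b" by (cases e) blast
        show ?thesis using EFsub that ab W_Upair[OF finF, of a b] by auto
      qed
      have WF1: "(\<Sum>v\<in>F. dterm v e) \<le> 1" if "e \<in># I" for e
      proof -
        obtain a b where ab: "e = Upair a b" by (cases e) blast
        have "a \<in> X \<or> b \<in> X" using that ab by (auto simp: I_def)
        then show ?thesis using ab W_Upair[OF finF, of a b] by (auto simp: F_def)
      qed
      have WX1: "(\<Sum>v\<in>X. dterm v e) \<ge> 1" if "e \<in># I" for e
      proof -
        obtain a b where ab: "e = Upair a b" by (cases e) blast
        have "a \<in> X \<or> b \<in> X" using that ab by (auto simp: I_def)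
        then show ?thesis using ab W_Upair[OF finX, of a b] by auto
      qed
      have "3 * card F \<le> (\<Sum>v\<in>F. degree E v)"
      proof -
        have "(\<Sum>v\<in>F. (3::nat)) \<le> (\<Sum>v\<in>F. degree E v)"
          using assms(4) by (intro sum_mono) (auto simp: F_def)
        then show ?thesis by simp
      qed
      also have "\<dots> = (\<Sum>e\<in>#EF. \<Sum>v\<in>F. dterm v e) + (\<Sum>e\<in>#I. \<Sum>v\<in>F. dterm v e)"
        by (simp add: deg_sum EI)
      also have "\<dots> \<le> (\<Sum>e\<in>#EF. 2) + (\<Sum>e\<in>#I. 1)"
        using WF2 WF1 by (intro add_mono sum_mset_mono) auto
      finally have h1: "3 * card F \<le> 2 * size EF + size I" by simp
      have h2: "size EF < size I"
      proof (cases "F = {}")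
        case False
        have "\<not> has_cycle F EF" using Xac by (simp add: acyclic_mg_def F_def EF_def)
        then have "size EF < card F" using forest_bound[OF finF False _ EFsub] by simp
        then show ?thesis using h1 by linarith
      next
        case True
        have "EF = {#}"
        proof (rule ccontr)
          assume "EF \<noteq> {#}"
          then obtain e where e: "e \<in># EF" by blast
          obtain a b where ab: "e = Upair a b" by (cases e) blast
          show False using EFsub e ab True by auto
        qed
        moreover have "E \<noteq> {#}"
        proof
          assume "E = {#}"
          obtain v where "v \<in> V" using Vne by blast
          then show False using assms(4) \<open>E = {#}\<close> by (auto simp: degree_def)
        qed
        ultimately show ?thesis using EI by (simp add: nonempty_has_size)
      qed
      have "size I \<le> (\<Sum>e\<in>#I. \<Sum>v\<in>X. dterm v e)"
      proof -
        have "(\<Sum>e\<in>#I. (1::nat)) \<le> (\<Sum>e\<in>#I. \<Sum>v\<in>X. dterm v e)"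
          using WX1 by (intro sum_mset_mono) auto
        then show ?thesis by simp
      qed
      also have "\<dots> \<le> (\<Sum>e\<in>#EF. \<Sum>v\<in>X. dterm v e) + (\<Sum>e\<in>#I. \<Sum>v\<in>X. dterm v e)" by simp
      also have "\<dots> = (\<Sum>v\<in>X. degree E v)" by (simp add: deg_sum EI)
      finally have h3: "size I \<le> (\<Sum>v\<in>X. degree E v)" .
      have Xne: "X \<noteq> {}" using h3 h2 by auto
      have kpos: "0 < real k" using assms(1) by simp
      have "real (\<Sum>v\<in>X. degree E v) = (\<Sum>v\<in>X. real (degree E v))" by simp
      also have "\<dots> < (\<Sum>v\<in>X. real m / (3 * real k))"
      proof (rule sum_strict_mono[OF finX Xne])
        fix x assume "x \<in> X"
        then have "x \<in> V" "x \<notin> B" using XV True by auto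
        then show "real (degree E x) < real m / (3 * real k)" using sig m_def by force
      qed
      also have "\<dots> = real (card X) * (real m / (3 * real k))" by simp
      also have "\<dots> \<le> real k * (real m / (3 * real k))"
        using Xk by (intro mult_right_mono) auto
      also have "\<dots> = real m / 3" using kpos by simp
      finally have "real (size I) < real m / 3" using h3
        by (meson of_nat_le_iff order_le_less_trans)
      moreover have "real m < 2 * real (size I)" using mI h2 by simp
      ultimately show ?thesis by simp
    qed
  qed
qed

end
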